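(* Let $\mathcal{H}=\bigotimes_{i=1}^n\mathbb{C}^{d_i}$, let $|\psi\rangle\in\mathcal{H}$ be a fully entangled pure state whose stabilizer $\mathcal{S}_\psi$ consists only of unitary operators (i.e. $\mathcal{S}_\psi\subseteq U(d_1)\otimes\cdots\otimes U(d_n)$), and let $g=g_1\otimes\cdots\otimes g_n$, $h=h_1\otimes\cdots\otimes h_n$ with $g_i,h_i\in GL(d_i,\mathbb{C})$ such that $\|g|\psi\rangle\|=\|h|\psi\rangle\|=1$. Put $G=g^\dagger g$, $H=h^\dagger h$. If $g|\psi\rangle$ can be transformed into $h|\psi\rangle$ via SEP, then $\operatorname{tr}(G)\ge\operatorname{tr}(H)$. Moreover, if $\operatorname{tr}(G)=\operatorname{tr}(H)$, then $g|\psi\rangle$ can be transformed into $h|\psi\rangle$ via SEP if and only if there exist finitely many probabilities $p_k\ge0$ with $\sum_kp_k=1$ and symmetries $S_k\in\mathcal{S}_\psi$ such that $\sum_kp_kS_k^\dagger HS_k=G$, i.e. if and only if the transformation is possible via $\mathrm{SEP}_1$.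
   Context: A pure state is fully entangled if each single-party reduced density matrix $\rho_i$ has rank $d_i$. The stabilizer $\mathcal{S}_\psi$ is the set of operators $S=S^{(1)}\otimes\cdots\otimes S^{(n)}$ with $S^{(i)}\in GL(d_i,\mathbb{C})$ and $S|\psi\rangle=|\psi\rangle$. A CPTP map on $\mathcal{B}(\mathcal{H})$ is in SEP if it has a Kraus decomposition with all Kraus operators of product form $\bigotimes_jK^{(j)}$, $K^{(j)}\in M(d_j,\mathbb{C})$; it is in $\mathrm{SEP}_1$ if moreover all $K^{(j)}$ can be chosen in $GL(d_j,\mathbb{C})$. A state $|\alpha\rangle$ can be transformed into $|\beta\rangle$ via a class of maps if some map $\Lambda$ in the class satisfies $\Lambda(|\alpha\rangle\langle\alpha|)=|\beta\rangle\langle\beta|$. *)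

theory Defs
  imports "HOL-Analysis.Analysis" "Jordan_Normal_Form.DL_Rank"
begin

text \<open>The Hilbert space H = C^{d_0} (x) ... (x) C^{d_(n-1)} is modelled as complex functions
on multi-indices xs (lists of length n with xs!j < d j), vanishing outside this index set.
Operators on H are kernels  nat list => nat list => complex  vanishing outside idx x idx.\<close>

definition idx :: "nat \<Rightarrow> (nat \<Rightarrow> nat) \<Rightarrow> nat list set" where
  "idx n d = {xs. length xs = n \<and> (\<forall>j<n. xs ! j < d j)}"

type_synonym state = "nat list \<Rightarrow> complex"
type_synonym oper = "nat list \<Rightarrow> nat list \<Rightarrow> complex"

definition in_space :: "nat \<Rightarrow> (nat \<Rightarrow> nat) \<Rightarrow> state \<Rightarrow> bool" where
  "in_space n d v \<longleftrightarrow> (\<forall>xs. xs \<notin> idx n d \<longrightarrow> v xs = 0)"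

definition op_apply :: "nat \<Rightarrow> (nat \<Rightarrow> nat) \<Rightarrow> oper \<Rightarrow> state \<Rightarrow> state" where
  "op_apply n d A v = (\<lambda>xs. \<Sum>ys\<in>idx n d. A xs ys * v ys)"

definition op_mult :: "nat \<Rightarrow> (nat \<Rightarrow> nat) \<Rightarrow> oper \<Rightarrow> oper \<Rightarrow> oper" where
  "op_mult n d A B = (\<lambda>xs ys. \<Sum>zs\<in>idx n d. A xs zs * B zs ys)"

definition op_adj :: "oper \<Rightarrow> oper" where
  "op_adj A = (\<lambda>xs ys. cnj (A ys xs))"

definition op_id :: "nat \<Rightarrow> (nat \<Rightarrow> nat) \<Rightarrow> oper" where
  "op_id n d = (\<lambda>xs ys. if xs \<in> idx n d \<and> xs = ys then 1 else 0)"

definition op_trace :: "nat \<Rightarrow> (nat \<Rightarrow> nat) \<Rightarrow> oper \<Rightarrow> complex" where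
  "op_trace n d A = (\<Sum>xs\<in>idx n d. A xs xs)"

definition ketbra :: "state \<Rightarrow> state \<Rightarrow> oper" where
  "ketbra a b = (\<lambda>xs ys. a xs * cnj (b ys))"

definition vnorm :: "nat \<Rightarrow> (nat \<Rightarrow> nat) \<Rightarrow> state \<Rightarrow> real" where
  "vnorm n d v = sqrt (\<Sum>xs\<in>idx n d. (cmod (v xs))\<^sup>2)"

definition prod_op :: "nat \<Rightarrow> (nat \<Rightarrow> nat) \<Rightarrow> (nat \<Rightarrow> complex mat) \<Rightarrow> oper" where
  "prod_op n d K = (\<lambda>xs ys. if xs \<in> idx n d \<and> ys \<in> idx n d
       then (\<Prod>j<n. K j $$ (xs ! j, ys ! j)) else 0)"

definition local_mats :: "nat \<Rightarrow> (nat \<Rightarrow> nat) \<Rightarrow> (nat \<Rightarrow> complex mat) \<Rightarrow> bool" where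
  "local_mats n d K \<longleftrightarrow> (\<forall>j<n. K j \<in> carrier_mat (d j) (d j))"

definition local_GL :: "nat \<Rightarrow> (nat \<Rightarrow> nat) \<Rightarrow> (nat \<Rightarrow> complex mat) \<Rightarrow> bool" where
  "local_GL n d K \<longleftrightarrow> local_mats n d K \<and> (\<forall>j<n. invertible_mat (K j))"

definition cadj :: "complex mat \<Rightarrow> complex mat" where
  "cadj A = mat (dim_col A) (dim_row A) (\<lambda>(i,j). cnj (A $$ (j,i)))"

definition unitary_mat :: "nat \<Rightarrow> complex mat \<Rightarrow> bool" where
  "unitary_mat m U \<longleftrightarrow> U \<in> carrier_mat m m \<and> cadj U * U = 1\<^sub>m m"

definition local_U :: "nat \<Rightarrow> (nat \<Rightarrow> nat) \<Rightarrow> (nat \<Rightarrow> complex mat) \<Rightarrow> bool" where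
  "local_U n d K \<longleftrightarrow> (\<forall>j<n. unitary_mat (d j) (K j))"

definition reduced :: "nat \<Rightarrow> (nat \<Rightarrow> nat) \<Rightarrow> state \<Rightarrow> nat \<Rightarrow> complex mat" where
  "reduced n d psi i = mat (d i) (d i) (\<lambda>(a,b).
      \<Sum>xs\<in>{xs\<in>idx n d. xs ! i = a}. psi xs * cnj (psi (xs[i := b])))"

definition fully_entangled :: "nat \<Rightarrow> (nat \<Rightarrow> nat) \<Rightarrow> state \<Rightarrow> bool" where
  "fully_entangled n d psi \<longleftrightarrow>
     (\<forall>i<n. vec_space.rank (d i) (reduced n d psi i) = d i)"

definition stabilizer :: "nat \<Rightarrow> (nat \<Rightarrow> nat) \<Rightarrow> state \<Rightarrow> oper set" where
  "stabilizer n d psi = {S. \<exists>K. local_GL n d K \<and> S = prod_op n d K \<and> op_apply n d S psi = psi}"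

definition kraus_apply :: "nat \<Rightarrow> (nat \<Rightarrow> nat) \<Rightarrow> (nat \<Rightarrow> complex mat) list \<Rightarrow> oper \<Rightarrow> oper" where
  "kraus_apply n d Ks rho = (\<lambda>xs ys. \<Sum>K\<leftarrow>Ks.
      op_mult n d (op_mult n d (prod_op n d K) rho) (op_adj (prod_op n d K)) xs ys)"

definition trace_preserving :: "nat \<Rightarrow> (nat \<Rightarrow> nat) \<Rightarrow> (nat \<Rightarrow> complex mat) list \<Rightarrow> bool" where
  "trace_preserving n d Ks \<longleftrightarrow>
     (\<lambda>xs ys. \<Sum>K\<leftarrow>Ks. op_mult n d (op_adj (prod_op n d K)) (prod_op n d K) xs ys) = op_id n d"

definition SEP_transformable :: "nat \<Rightarrow> (nat \<Rightarrow> nat) \<Rightarrow> state \<Rightarrow> state \<Rightarrow> bool" where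
  "SEP_transformable n d alpha beta \<longleftrightarrow> (\<exists>Ks.
      (\<forall>K\<in>set Ks. local_mats n d K) \<and> trace_preserving n d Ks \<and>
      kraus_apply n d Ks (ketbra alpha alpha) = ketbra beta beta)"

definition SEP1_transformable :: "nat \<Rightarrow> (nat \<Rightarrow> nat) \<Rightarrow> state \<Rightarrow> state \<Rightarrow> bool" where
  "SEP1_transformable n d alpha beta \<longleftrightarrow> (\<exists>Ks.
      (\<forall>K\<in>set Ks. local_GL n d K) \<and> trace_preserving n d Ks \<and>
      kraus_apply n d Ks (ketbra alpha alpha) = ketbra beta beta)"

end

theory Submission
  imports Defs
begin


lemma idx_Suc: "idx (Suc n) d = (\<lambda>(xs,z). xs @ [z]) ` (idx n d \<times> {..<d n})"
proof (intro equalityI subsetI)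
  fix ys assume "ys \<in> idx (Suc n) d"
  then have l: "length ys = Suc n" and b: "\<forall>j<Suc n. ys ! j < d j" by (auto simp: idx_def)
  then have "ys = butlast ys @ [last ys]" by (metis append_butlast_last_id list.size(3) nat.distinct(1))
  moreover have "butlast ys \<in> idx n d" using l b by (auto simp: idx_def nth_butlast)
  moreover have "last ys < d n" using l b by (metis last_conv_nth lessI list.size(3) nat.distinct(1) diff_Suc_1)
  ultimately show "ys \<in> (\<lambda>(xs,z). xs @ [z]) ` (idx n d \<times> {..<d n})" by force
next
  fix ys assume "ys \<in> (\<lambda>(xs,z). xs @ [z]) ` (idx n d \<times> {..<d n})"
  then show "ys \<in> idx (Suc n) d"
    by (auto simp: idx_def nth_append less_Suc_eq)
qed

lemma idx_Suc_inj: "inj_on (\<lambda>(xs,z). xs @ [z]) (idx n d \<times> {..<d n})"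
  by (auto simp: inj_on_def idx_def)

lemma finite_idx[simp]: "finite (idx n d)"
  proof (induction n)
  case 0
  have "idx 0 d = {[]}" by (auto simp: idx_def)
  then show ?case by simp
qed (simp add: idx_Suc)

lemma sum_prod_idx:
  "(\<Sum>xs\<in>idx n d. \<Prod>j<n. f j (xs!j)) = (\<Prod>j<n. \<Sum>z<d j. (f j z :: 'a::comm_semiring_1))"
proof (induction n)
  case 0
  have "idx 0 d = {[]}" by (auto simp: idx_def)
  then show ?case by simp
next
  case (Suc n)
  have "(\<Sum>xs\<in>idx (Suc n) d. \<Prod>j<Suc n. f j (xs!j))
      = (\<Sum>p\<in>idx n d \<times> {..<d n}. \<Prod>j<Suc n. f j ((fst p @ [snd p])!j))"
    unfolding idx_Suc by (subst sum.reindex[OF idx_Suc_inj]) (simp add: case_prod_beta)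
  also have "\<dots> = (\<Sum>p\<in>idx n d \<times> {..<d n}. (\<Prod>j<n. f j (fst p!j)) * f n (snd p))"
  proof (rule sum.cong[OF refl])
    fix p assume "p \<in> idx n d \<times> {..<d n}"
    then have l: "length (fst p) = n" by (auto simp: idx_def)
    have "(\<Prod>j<Suc n. f j ((fst p @ [snd p])!j)) = (\<Prod>j<n. f j ((fst p @ [snd p])!j)) * f n (snd p)"
      using l by (simp add: nth_append)
    also have "(\<Prod>j<n. f j ((fst p @ [snd p])!j)) = (\<Prod>j<n. f j (fst p!j))"
      using l by (intro prod.cong) (auto simp: nth_append)
    finally show "(\<Prod>j<Suc n. f j ((fst p @ [snd p])!j)) = (\<Prod>j<n. f j (fst p!j)) * f n (snd p)" .
  qed
  also have "\<dots> = (\<Sum>xs\<in>idx n d. \<Prod>j<n. f j (xs!j)) * (\<Sum>z<d n. f n z)"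
    by (simp add: sum_product sum.cartesian_product case_prod_beta)
  finally show ?case using Suc by simp
qed

lemma if_distrib_mult: "(if P then (1::'a::semiring_1) else 0) * a = (if P then a else 0)"
  "a * (if P then (1::'a::semiring_1) else 0) = (if P then a else 0)" by auto

definition supp_op :: "nat \<Rightarrow> (nat \<Rightarrow> nat) \<Rightarrow> oper \<Rightarrow> bool" where
  "supp_op n d A \<longleftrightarrow> (\<forall>xs ys. xs \<notin> idx n d \<or> ys \<notin> idx n d \<longrightarrow> A xs ys = 0)"

lemma op_mult_assoc: "op_mult n d (op_mult n d A B) C = op_mult n d A (op_mult n d B C)"
  unfolding op_mult_def
  by (intro ext) (simp add: sum_distrib_left sum_distrib_right mult.assoc, rule sum.swap)

lemma op_apply_mult: "op_apply n d (op_mult n d A B) v = op_apply n d A (op_apply n d B v)"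
  unfolding op_mult_def op_apply_def
  by (intro ext) (simp add: sum_distrib_left sum_distrib_right mult.assoc, rule sum.swap)

lemma op_adj_mult: "op_adj (op_mult n d A B) = op_mult n d (op_adj B) (op_adj A)"
  unfolding op_mult_def op_adj_def by (intro ext) (simp add: mult.commute)

lemma op_adj_adj[simp]: "op_adj (op_adj A) = A"
  unfolding op_adj_def by simp

lemma op_mult_id_left: assumes "supp_op n d A" shows "op_mult n d (op_id n d) A = A"
proof (intro ext)
  fix xs ys
  show "op_mult n d (op_id n d) A xs ys = A xs ys"
    using assms by (cases "xs \<in> idx n d") (auto simp: op_mult_def op_id_def supp_op_def if_distrib_mult sum.delta sum.delta' cong: if_cong)
qed

lemma op_mult_id_right: assumes "supp_op n d A" shows "op_mult n d A (op_id n d) = A"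
proof (intro ext)
  fix xs ys
  show "op_mult n d A (op_id n d) xs ys = A xs ys"
    using assms by (cases "ys \<in> idx n d") (auto simp: op_mult_def op_id_def supp_op_def if_distrib_mult sum.delta sum.delta' cong: if_cong)
qed

lemma op_apply_id: assumes "in_space n d v" shows "op_apply n d (op_id n d) v = v"
proof (intro ext)
  fix xs
  show "op_apply n d (op_id n d) v xs = v xs"
    using assms by (cases "xs \<in> idx n d") (auto simp: op_apply_def op_id_def in_space_def if_distrib_mult sum.delta sum.delta' cong: if_cong)
qed

lemma supp_prod_op: "supp_op n d (prod_op n d K)"
  unfolding supp_op_def prod_op_def by auto

lemma supp_op_id: "supp_op n d (op_id n d)"
  unfolding supp_op_def op_id_def by auto

lemma supp_op_mult: "supp_op n d A \<Longrightarrow> supp_op n d B \<Longrightarrow> supp_op n d (op_mult n d A B)"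
  unfolding supp_op_def op_mult_def by auto

lemma supp_op_adj: "supp_op n d A \<Longrightarrow> supp_op n d (op_adj A)"
  unfolding supp_op_def op_adj_def by auto

lemma in_space_apply: "supp_op n d A \<Longrightarrow> in_space n d (op_apply n d A v)"
  unfolding supp_op_def in_space_def op_apply_def by auto

lemma ketbra_sandwich:
  "op_mult n d (op_mult n d A (ketbra a b)) (op_adj B) = ketbra (op_apply n d A a) (op_apply n d B b)"
  unfolding op_mult_def ketbra_def op_adj_def op_apply_def
  by (intro ext) (simp add: sum_distrib_left sum_distrib_right ac_simps)

lemma trace_comm: "op_trace n d (op_mult n d A B) = op_trace n d (op_mult n d B A)"
  unfolding op_trace_def op_mult_def
  by (subst sum.swap) (simp add: mult.commute)

lemma cnorm_sq: "(complex_of_real (cmod z))^2 = cnj z * z"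
  by (metis complex_norm_square of_real_power mult.commute)

lemma trace_adj_self:
  "op_trace n d (op_mult n d (op_adj X) X) = of_real (\<Sum>xs\<in>idx n d. \<Sum>ys\<in>idx n d. (cmod (X ys xs))\<^sup>2)"
  unfolding op_trace_def op_mult_def op_adj_def
  by (simp add: cnorm_sq)

lemma op_mult_sum_right:
  "op_mult n d A (\<lambda>xs ys. \<Sum>K\<leftarrow>Ks. F K xs ys) = (\<lambda>xs ys. \<Sum>K\<leftarrow>Ks. op_mult n d A (F K) xs ys)"
proof -
  have "op_mult n d A (\<lambda>xs ys. \<Sum>K\<leftarrow>Ks. F K xs ys) xs ys = (\<Sum>K\<leftarrow>Ks. op_mult n d A (F K) xs ys)" for xs ys
    by (induction Ks) (simp_all add: op_mult_def distrib_left sum.distrib)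
  then show ?thesis by (intro ext)
qed

lemma op_mult_sum_left:
  "op_mult n d (\<lambda>xs ys. \<Sum>K\<leftarrow>Ks. F K xs ys) A = (\<lambda>xs ys. \<Sum>K\<leftarrow>Ks. op_mult n d (F K) A xs ys)"
proof -
  have "op_mult n d (\<lambda>xs ys. \<Sum>K\<leftarrow>Ks. F K xs ys) A xs ys = (\<Sum>K\<leftarrow>Ks. op_mult n d (F K) A xs ys)" for xs ys
    by (induction Ks) (simp_all add: op_mult_def distrib_right sum.distrib)
  then show ?thesis by (intro ext)
qed

lemma op_trace_sum:
  "op_trace n d (\<lambda>xs ys. \<Sum>K\<leftarrow>Ks. F K xs ys) = (\<Sum>K\<leftarrow>Ks. op_trace n d (F K))"
  by (induction Ks) (simp_all add: op_trace_def sum.distrib)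

lemma mat_mult_entry:
  assumes "A \<in> carrier_mat m m" "B \<in> carrier_mat m m" "a < m" "b < m"
  shows "(A * B) $$ (a, b) = (\<Sum>z<m. A $$ (a, z) * B $$ (z, b))"
  using assms by (simp add: index_mult_mat scalar_prod_def atLeast0LessThan)

lemma local_mats_mult: "local_mats n d K \<Longrightarrow> local_mats n d L \<Longrightarrow> local_mats n d (\<lambda>j. K j * L j)"
  unfolding local_mats_def by auto

lemma cadj_carrier: "A \<in> carrier_mat m m \<Longrightarrow> cadj A \<in> carrier_mat m m"
  unfolding cadj_def by auto

lemma cadj_entry: "A \<in> carrier_mat m m \<Longrightarrow> a < m \<Longrightarrow> b < m \<Longrightarrow> cadj A $$ (a, b) = cnj (A $$ (b, a))"
  unfolding cadj_def by auto

lemma local_mats_cadj: "local_mats n d K \<Longrightarrow> local_mats n d (\<lambda>j. cadj (K j))"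
  unfolding local_mats_def by (auto intro: cadj_carrier)

lemma local_mats_one: "local_mats n d (\<lambda>j. 1\<^sub>m (d j))"
  unfolding local_mats_def by auto

lemma idx_nth: "xs \<in> idx n d \<Longrightarrow> j < n \<Longrightarrow> xs ! j < d j"
  unfolding idx_def by auto

lemma prod_op_mult:
  assumes K: "local_mats n d K" and L: "local_mats n d L"
  shows "op_mult n d (prod_op n d K) (prod_op n d L) = prod_op n d (\<lambda>j. K j * L j)"
proof (intro ext)
  fix xs ys
  show "op_mult n d (prod_op n d K) (prod_op n d L) xs ys = prod_op n d (\<lambda>j. K j * L j) xs ys"
  proof (cases "xs \<in> idx n d \<and> ys \<in> idx n d")
    case True
    have "op_mult n d (prod_op n d K) (prod_op n d L) xs ys
        = (\<Sum>zs\<in>idx n d. (\<Prod>j<n. K j $$ (xs!j, zs!j)) * (\<Prod>j<n. L j $$ (zs!j, ys!j)))"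
      using True unfolding op_mult_def prod_op_def by (intro sum.cong) auto
    also have "\<dots> = (\<Sum>zs\<in>idx n d. \<Prod>j<n. K j $$ (xs!j, zs!j) * L j $$ (zs!j, ys!j))"
      by (simp add: prod.distrib)
    also have "\<dots> = (\<Prod>j<n. \<Sum>z<d j. K j $$ (xs!j, z) * L j $$ (z, ys!j))"
      by (rule sum_prod_idx)
    also have "\<dots> = (\<Prod>j<n. (K j * L j) $$ (xs!j, ys!j))"
    proof (rule prod.cong[OF refl])
      fix j assume "j \<in> {..<n}"
      then show "(\<Sum>z<d j. K j $$ (xs!j, z) * L j $$ (z, ys!j)) = (K j * L j) $$ (xs!j, ys!j)"
        using K L True by (subst mat_mult_entry) (auto simp: local_mats_def idx_nth)
    qed
    finally show ?thesis using True unfolding prod_op_def by simp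
  next
    case False
    then show ?thesis unfolding op_mult_def prod_op_def by auto
  qed
qed

lemma prod_op_adj:
  assumes K: "local_mats n d K"
  shows "op_adj (prod_op n d K) = prod_op n d (\<lambda>j. cadj (K j))"
proof (intro ext)
  fix xs ys
  show "op_adj (prod_op n d K) xs ys = prod_op n d (\<lambda>j. cadj (K j)) xs ys"
    using K unfolding op_adj_def prod_op_def
    by (auto intro!: prod.cong simp: cadj_entry local_mats_def idx_nth)
qed

lemma prod_op_one: "prod_op n d (\<lambda>j. 1\<^sub>m (d j)) = op_id n d"
proof (intro ext)
  fix xs ys
  show "prod_op n d (\<lambda>j. 1\<^sub>m (d j)) xs ys = op_id n d xs ys"
  proof (cases "xs \<in> idx n d \<and> ys \<in> idx n d")
    case True
    then have l: "length xs = n" "length ys = n" by (auto simp: idx_def)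
    have "(\<Prod>j<n. (1\<^sub>m (d j) :: complex mat) $$ (xs!j, ys!j)) = (\<Prod>j<n. if xs!j = ys!j then 1 else 0)"
      using True by (intro prod.cong) (auto simp: idx_nth)
    also have "\<dots> = (if xs = ys then 1 else 0)"
    proof (cases "xs = ys")
      case True then show ?thesis by simp
    next
      case False
      then obtain j where "j < n" "xs!j \<noteq> ys!j" using l nth_equalityI by metis
      then have z: "(\<Prod>j<n. if xs!j = ys!j then 1 else 0) = (0::complex)"
        apply (rule_tac prod_zero) apply simp by force
      show ?thesis by (subst if_not_P[OF False]) (rule z)
    qed
    finally show ?thesis using True unfolding prod_op_def op_id_def by simp
  next
    case False
    then show ?thesis unfolding prod_op_def op_id_def by auto
  qed
qed

lemma invertible_inv:
  assumes A: "A \<in> carrier_mat m m" and inv: "invertible_mat A"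
  shows "\<exists>B. B \<in> carrier_mat m m \<and> A * B = 1\<^sub>m m \<and> B * A = 1\<^sub>m m"
proof -
  from inv obtain B where AB: "A * B = 1\<^sub>m (dim_row A)" and BA: "B * A = 1\<^sub>m (dim_row B)"
    unfolding invertible_mat_def inverts_mat_def by blast
  have "dim_col B = m" using arg_cong[OF AB, of dim_col] A by auto
  moreover have "dim_row B = m" using arg_cong[OF BA, of dim_col] A by auto
  ultimately show ?thesis using AB BA A by auto
qed

lemma invertible_det:
  assumes A: "(A :: complex mat) \<in> carrier_mat m m"
  shows "invertible_mat A \<longleftrightarrow> det A \<noteq> 0"
proof
  assume "invertible_mat A"
  then obtain B where B: "B \<in> carrier_mat m m" "A * B = 1\<^sub>m m" using invertible_inv[OF A] by blast
  have "det A * det B = 1" using det_mult[OF A B(1)] B(2) by simp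
  then show "det A \<noteq> 0" by auto
next
  assume "det A \<noteq> 0"
  from det_non_zero_imp_unit[OF A this, of "()"]
  obtain B where "B \<in> carrier_mat m m" "B * A = 1\<^sub>m m" "A * B = 1\<^sub>m m"
    unfolding Units_def ring_mat_def by auto
  then show "invertible_mat A" using A unfolding invertible_mat_def inverts_mat_def square_mat.simps
    by (metis carrier_matD(1) carrier_matD(2))
qed

subsection \<open>Rank one decomposition\<close>

lemma sum_list_cnj_sq:
  "(\<Sum>k\<leftarrow>ks. w k * cnj (w k)) = complex_of_real (\<Sum>k\<leftarrow>ks. (cmod (w k))\<^sup>2)"
  by (induction ks) (simp_all add: cnorm_sq mult.commute)

lemma sum_list_sq_zero:
  assumes "(\<Sum>k\<leftarrow>ks. w k * cnj (w k)) = 0"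
  shows "\<forall>k\<in>set ks. w k = 0"
proof -
  have "(\<Sum>k\<leftarrow>ks. (cmod (w k))\<^sup>2) = 0" using assms unfolding sum_list_cnj_sq by simp
  then have "\<forall>x\<in>set (map (\<lambda>k. (cmod (w k))\<^sup>2) ks). x = 0"
    by (subst sum_list_nonneg_eq_0_iff[symmetric]) auto
  then show ?thesis by auto
qed

lemma rank_one_decomp:
  fixes v :: "'k \<Rightarrow> 'x \<Rightarrow> complex"
  assumes hyp: "\<And>x y. x \<in> I \<Longrightarrow> y \<in> I \<Longrightarrow> (\<Sum>k\<leftarrow>ks. v k x * cnj (v k y)) = b x * cnj (b y)"
    and x0: "x0 \<in> I" and b0: "b x0 \<noteq> 0"
    and k: "k \<in> set ks" and x: "x \<in> I"
  shows "v k x = (v k x0 / b x0) * b x"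
proof -
  define a where "a = b x0"
  define c where "c = b x"
  define w where "w k = a * v k x - c * v k x0" for k
  have e: "w k * cnj (w k) = (a * cnj a) * (v k x * cnj (v k x)) - (a * cnj c) * (v k x * cnj (v k x0))
     - (c * cnj a) * (v k x0 * cnj (v k x)) + (c * cnj c) * (v k x0 * cnj (v k x0))" for k
    unfolding w_def by (simp add: algebra_simps)
  have "(\<Sum>k\<leftarrow>ks. w k * cnj (w k)) = (a * cnj a) * (\<Sum>k\<leftarrow>ks. v k x * cnj (v k x))
     - (a * cnj c) * (\<Sum>k\<leftarrow>ks. v k x * cnj (v k x0))
     - (c * cnj a) * (\<Sum>k\<leftarrow>ks. v k x0 * cnj (v k x)) + (c * cnj c) * (\<Sum>k\<leftarrow>ks. v k x0 * cnj (v k x0))"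
    unfolding e by (simp add: sum_list_addf sum_list_subtractf sum_list_const_mult)
  also have "\<dots> = 0" using hyp x x0 unfolding a_def c_def by (simp add: algebra_simps)
  finally have "w k = 0" using sum_list_sq_zero k by blast
  then show ?thesis using b0 unfolding w_def a_def c_def by (simp add: field_simps)
qed

lemma sum_list_filter_if:
  "(\<Sum>x\<leftarrow>filter P xs. f x) = (\<Sum>x\<leftarrow>xs. if P x then f x else (0::'a::comm_monoid_add))"
  by (induction xs) auto

lemma sum_list_filter_zero:
  assumes "\<And>x. x \<in> set xs \<Longrightarrow> \<not> P x \<Longrightarrow> f x = 0"
  shows "(\<Sum>x\<leftarrow>filter P xs. f x) = (\<Sum>x\<leftarrow>xs. (f x :: 'a::comm_monoid_add))"
  using assms by (induction xs) auto

definition smul :: "complex \<Rightarrow> oper \<Rightarrow> oper" where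
  "smul c A = (\<lambda>xs ys. c * A xs ys)"

lemma smul_mult_left: "op_mult n d (smul c A) B = smul c (op_mult n d A B)"
  unfolding smul_def op_mult_def by (simp add: sum_distrib_left mult.assoc)

lemma smul_mult_right: "op_mult n d A (smul c B) = smul c (op_mult n d A B)"
  unfolding smul_def op_mult_def by (simp add: sum_distrib_left ac_simps)

lemma smul_adj: "op_adj (smul c A) = smul (cnj c) (op_adj A)"
  unfolding smul_def op_adj_def by simp

lemma smul_smul: "smul a (smul b A) = smul (a * b) A"
  unfolding smul_def by (simp add: mult.assoc)

lemma smul_one[simp]: "smul 1 A = A"
  unfolding smul_def by simp

lemma smul_apply: "op_apply n d (smul c A) v = (\<lambda>xs. c * op_apply n d A v xs)"
  unfolding smul_def op_apply_def by (simp add: sum_distrib_left mult.assoc)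

lemma apply_scaled: "op_apply n d A (\<lambda>xs. c * v xs) = (\<lambda>xs. c * op_apply n d A v xs)"
  unfolding op_apply_def by (simp add: sum_distrib_left ac_simps)

lemma op_trace_smul: "op_trace n d (smul c A) = c * op_trace n d A"
  unfolding op_trace_def smul_def by (simp add: sum_distrib_left)

lemma prod_op_cong: "(\<And>j. j < n \<Longrightarrow> K j = L j) \<Longrightarrow> prod_op n d K = prod_op n d L"
  unfolding prod_op_def by (intro ext) auto

lemma prod_op_scale0:
  assumes "0 < n" and Kc: "K 0 \<in> carrier_mat (d 0) (d 0)"
  shows "prod_op n d (K(0 := c \<cdot>\<^sub>m K 0)) = smul c (prod_op n d K)"
proof (intro ext)
  fix xs ys
  show "prod_op n d (K(0 := c \<cdot>\<^sub>m K 0)) xs ys = smul c (prod_op n d K) xs ys"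
  proof (cases "xs \<in> idx n d \<and> ys \<in> idx n d")
    case True
    have "0 \<in> {..<n}" using assms by simp
    have "(\<Prod>j<n. (K(0 := c \<cdot>\<^sub>m K 0)) j $$ (xs!j, ys!j))
        = (K(0 := c \<cdot>\<^sub>m K 0)) 0 $$ (xs!0, ys!0) * (\<Prod>j\<in>{..<n}-{0}. (K(0 := c \<cdot>\<^sub>m K 0)) j $$ (xs!j, ys!j))"
      using assms by (subst prod.remove[of _ 0]) auto
    also have "\<dots> = c * K 0 $$ (xs!0, ys!0) * (\<Prod>j\<in>{..<n}-{0}. K j $$ (xs!j, ys!j))"
    proof -
      have "(K(0 := c \<cdot>\<^sub>m K 0)) 0 $$ (xs!0, ys!0) = c * K 0 $$ (xs!0, ys!0)"
        using idx_nth[of xs n d 0] idx_nth[of ys n d 0] True Kc assms by simp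
      moreover have "(\<Prod>j\<in>{..<n}-{0}. (K(0 := c \<cdot>\<^sub>m K 0)) j $$ (xs!j, ys!j)) = (\<Prod>j\<in>{..<n}-{0}. K j $$ (xs!j, ys!j))"
        by (intro prod.cong) auto
      ultimately show ?thesis by simp
    qed
    also have "\<dots> = c * (\<Prod>j<n. K j $$ (xs!j, ys!j))"
      using assms by (subst prod.remove[of _ 0]) auto
    finally show ?thesis using True unfolding prod_op_def smul_def by simp
  next
    case False
    then show ?thesis unfolding prod_op_def smul_def by auto
  qed
qed



lemma idx_update: "xs \<in> idx n d \<Longrightarrow> j < n \<Longrightarrow> a < d j \<Longrightarrow> xs[j := a] \<in> idx n d"
  unfolding idx_def by (auto simp: nth_list_update)

lemma local_invertible:
  assumes full: "fully_entangled n d psi"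
    and X: "local_mats n d X"
    and eq: "op_apply n d (prod_op n d X) psi = (\<lambda>xs. c * psi xs)"
    and c: "c \<noteq> 0"
    and j: "j < n"
  shows "det (X j) \<noteq> 0"
proof
  assume det0: "det (X j) = 0"
  have Xj: "X j \<in> carrier_mat (d j) (d j)" using X j unfolding local_mats_def by auto
  have "det (transpose_mat (X j)) = 0" using det0 det_transpose[OF Xj] by simp
  then obtain u where u: "u \<in> carrier_vec (d j)" "u \<noteq> 0\<^sub>v (d j)" "transpose_mat (X j) *\<^sub>v u = 0\<^sub>v (d j)"
    using det_0_iff_vec_prod_zero_field[of "transpose_mat (X j)" "d j"] Xj by auto
  have ucol: "(\<Sum>a<d j. u$a * X j $$ (a,b)) = 0" if b: "b < d j" for b
  proof -
    have "(transpose_mat (X j) *\<^sub>v u) $ b = 0" using u(3) b by simp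
    then show ?thesis using b Xj u(1)
      by (simp add: scalar_prod_def atLeast0LessThan mult.commute)
  qed
  have contr: "(\<Sum>a<d j. u$a * psi (xs[j:=a])) = 0" if xs: "xs \<in> idx n d" for xs
  proof -
    have "c * (\<Sum>a<d j. u$a * psi (xs[j:=a])) = (\<Sum>a<d j. u$a * op_apply n d (prod_op n d X) psi (xs[j:=a]))"
      unfolding eq by (simp add: sum_distrib_left ac_simps)
    also have "\<dots> = (\<Sum>a<d j. u$a * (\<Sum>ys\<in>idx n d. (X j $$ (a, ys!j) * (\<Prod>i\<in>{..<n}-{j}. X i $$ (xs!i, ys!i))) * psi ys))"
    proof (rule sum.cong[OF refl])
      fix a assume a: "a \<in> {..<d j}"
      have "op_apply n d (prod_op n d X) psi (xs[j:=a]) = (\<Sum>ys\<in>idx n d. (X j $$ (a, ys!j) * (\<Prod>i\<in>{..<n}-{j}. X i $$ (xs!i, ys!i))) * psi ys)"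
        unfolding op_apply_def
      proof (rule sum.cong[OF refl])
        fix ys assume ys: "ys \<in> idx n d"
        have l: "length xs = n" using xs by (auto simp: idx_def)
        have "prod_op n d X (xs[j:=a]) ys = (\<Prod>i<n. X i $$ (xs[j:=a]!i, ys!i))"
          using idx_update[OF xs j] a ys unfolding prod_op_def by auto
        also have "\<dots> = X j $$ (xs[j:=a]!j, ys!j) * (\<Prod>i\<in>{..<n}-{j}. X i $$ (xs[j:=a]!i, ys!i))"
          using j by (subst prod.remove[of _ j]) auto
        also have "\<dots> = X j $$ (a, ys!j) * (\<Prod>i\<in>{..<n}-{j}. X i $$ (xs!i, ys!i))"
          using l j by (auto intro!: prod.cong simp: nth_list_update)
        finally show "prod_op n d X (xs[j:=a]) ys * psi ys = (X j $$ (a, ys!j) * (\<Prod>i\<in>{..<n}-{j}. X i $$ (xs!i, ys!i))) * psi ys"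
          by simp
      qed
      then show "u$a * op_apply n d (prod_op n d X) psi (xs[j:=a]) = u$a * (\<Sum>ys\<in>idx n d. (X j $$ (a, ys!j) * (\<Prod>i\<in>{..<n}-{j}. X i $$ (xs!i, ys!i))) * psi ys)"
        by simp
    qed
    also have "\<dots> = (\<Sum>ys\<in>idx n d. (\<Sum>a<d j. u$a * X j $$ (a, ys!j)) * ((\<Prod>i\<in>{..<n}-{j}. X i $$ (xs!i, ys!i)) * psi ys))"
      by (simp add: sum_distrib_left sum_distrib_right ac_simps sum.swap[of _ "{..<d j}"])
    also have "\<dots> = 0"
      using ucol idx_nth[OF _ j] by (intro sum.neutral) auto
    finally show ?thesis using c by simp
  qed
  define R where "R = reduced n d psi j"
  have Rc: "R \<in> carrier_mat (d j) (d j)" unfolding R_def reduced_def by auto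
  define v where "v = vec (d j) (\<lambda>b. cnj (u$b))"
  have vc: "v \<in> carrier_vec (d j)" unfolding v_def by auto
  have v0: "v \<noteq> 0\<^sub>v (d j)"
  proof
    assume "v = 0\<^sub>v (d j)"
    then have "\<forall>b<d j. u$b = 0" unfolding v_def by (metis index_vec index_zero_vec(1) complex_cnj_zero_iff)
    then have "u = 0\<^sub>v (d j)" using u(1) by (intro eq_vecI) auto
    then show False using u(2) by simp
  qed
  have Rv: "R *\<^sub>v v = 0\<^sub>v (d j)"
  proof (intro eq_vecI)
    fix a assume a: "a < dim_vec (0\<^sub>v (d j) :: complex vec)"
    then have a': "a < d j" by simp
    have "(R *\<^sub>v v) $ a = (\<Sum>b<d j. R $$ (a,b) * cnj (u$b))"
      using a' Rc vc unfolding v_def by (simp add: scalar_prod_def atLeast0LessThan)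
    also have "\<dots> = (\<Sum>b<d j. \<Sum>xs\<in>{xs\<in>idx n d. xs ! j = a}. psi xs * cnj (psi (xs[j := b])) * cnj (u$b))"
      using a' unfolding R_def reduced_def by (simp add: sum_distrib_right)
    also have "\<dots> = (\<Sum>xs\<in>{xs\<in>idx n d. xs ! j = a}. psi xs * cnj (\<Sum>b<d j. u$b * psi (xs[j := b])))"
      by (subst sum.swap) (simp add: sum_distrib_left ac_simps)
    also have "\<dots> = 0" using contr by (intro sum.neutral) auto
    finally show "(R *\<^sub>v v) $ a = 0\<^sub>v (d j) $ a" using a' by simp
  qed (use Rc in simp)
  have "det R = 0" using det_0_iff_vec_prod_zero_field[OF Rc] vc v0 Rv by auto
  then have "vec_space.rank (d j) R \<noteq> d j" using vec_space.det_rank_iff[OF Rc] by auto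
  then show False using full j unfolding fully_entangled_def R_def by auto
qed



locale L2 =
  fixes n :: nat and d :: "nat \<Rightarrow> nat" and psi :: state and g h :: "nat \<Rightarrow> complex mat"
  assumes psi_in: "in_space n d psi"
    and psi_norm: "vnorm n d psi = 1"
    and full: "fully_entangled n d psi"
    and stab_unitary: "\<forall>S\<in>stabilizer n d psi. \<exists>U. local_U n d U \<and> S = prod_op n d U"
    and g_GL: "local_GL n d g" and h_GL: "local_GL n d h"
    and g_norm: "vnorm n d (op_apply n d (prod_op n d g) psi) = 1"
    and h_norm: "vnorm n d (op_apply n d (prod_op n d h) psi) = 1"
    and npos: "0 < n"
begin

definition "PG = prod_op n d g"
definition "PH = prod_op n d h"
definition "alpha = op_apply n d PG psi"
definition "beta = op_apply n d PH psi"
definition "GG = op_mult n d (op_adj PG) PG"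
definition "HH = op_mult n d (op_adj PH) PH"

definition "gi j = (SOME B. B \<in> carrier_mat (d j) (d j) \<and> g j * B = 1\<^sub>m (d j) \<and> B * g j = 1\<^sub>m (d j))"
definition "hi j = (SOME B. B \<in> carrier_mat (d j) (d j) \<and> h j * B = 1\<^sub>m (d j) \<and> B * h j = 1\<^sub>m (d j))"
definition "PGi = prod_op n d gi"
definition "PHi = prod_op n d hi"

lemma g_mats: "local_mats n d g" and h_mats: "local_mats n d h"
  using g_GL h_GL unfolding local_GL_def by auto

lemma gi_props: "j < n \<Longrightarrow> gi j \<in> carrier_mat (d j) (d j) \<and> g j * gi j = 1\<^sub>m (d j) \<and> gi j * g j = 1\<^sub>m (d j)"
  unfolding gi_def
  by (rule someI_ex, rule invertible_inv) (use g_GL in \<open>auto simp: local_GL_def local_mats_def\<close>)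

lemma hi_props: "j < n \<Longrightarrow> hi j \<in> carrier_mat (d j) (d j) \<and> h j * hi j = 1\<^sub>m (d j) \<and> hi j * h j = 1\<^sub>m (d j)"
  unfolding hi_def
  by (rule someI_ex, rule invertible_inv) (use h_GL in \<open>auto simp: local_GL_def local_mats_def\<close>)

lemma gi_mats: "local_mats n d gi" and hi_mats: "local_mats n d hi"
  using gi_props hi_props unfolding local_mats_def by auto

lemma PG_PGi: "op_mult n d PG PGi = op_id n d"
  unfolding PG_def PGi_def prod_op_mult[OF g_mats gi_mats] prod_op_one[symmetric]
  by (rule prod_op_cong) (use gi_props in auto)

lemma PGi_PG: "op_mult n d PGi PG = op_id n d"
  unfolding PG_def PGi_def prod_op_mult[OF gi_mats g_mats] prod_op_one[symmetric]
  by (rule prod_op_cong) (use gi_props in auto)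

lemma PH_PHi: "op_mult n d PH PHi = op_id n d"
  unfolding PH_def PHi_def prod_op_mult[OF h_mats hi_mats] prod_op_one[symmetric]
  by (rule prod_op_cong) (use hi_props in auto)

lemma PHi_PH: "op_mult n d PHi PH = op_id n d"
  unfolding PH_def PHi_def prod_op_mult[OF hi_mats h_mats] prod_op_one[symmetric]
  by (rule prod_op_cong) (use hi_props in auto)

lemma supp_PG: "supp_op n d PG" and supp_PH: "supp_op n d PH"
  and supp_PGi: "supp_op n d PGi" and supp_PHi: "supp_op n d PHi"
  unfolding PG_def PH_def PGi_def PHi_def by (auto intro: supp_prod_op)

lemma supp_GG: "supp_op n d GG" and supp_HH: "supp_op n d HH"
  unfolding GG_def HH_def by (auto intro!: supp_op_mult supp_op_adj supp_PG supp_PH)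

lemma beta_in: "in_space n d beta" and alpha_in: "in_space n d alpha"
  unfolding beta_def alpha_def by (auto intro!: in_space_apply supp_PG supp_PH)

lemma beta_nz: "\<exists>x0\<in>idx n d. beta x0 \<noteq> 0"
proof (rule ccontr)
  assume "\<not> ?thesis"
  then have "vnorm n d beta = 0" unfolding vnorm_def by simp
  then show False using h_norm unfolding beta_def PH_def by simp
qed

definition "x0 = (SOME x. x \<in> idx n d \<and> beta x \<noteq> 0)"

lemma x0: "x0 \<in> idx n d" "beta x0 \<noteq> 0"
  using someI_ex[OF beta_nz[unfolded Bex_def]] unfolding x0_def by auto

definition "cK K = op_apply n d (prod_op n d K) alpha x0 / beta x0"

definition "sep_wit Ks \<longleftrightarrow> (\<forall>K\<in>set Ks. local_mats n d K) \<and> trace_preserving n d Ks \<and>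
      kraus_apply n d Ks (ketbra alpha alpha) = ketbra beta beta"

lemma kraus_pointwise:
  assumes "kraus_apply n d Ks (ketbra alpha alpha) = ketbra beta beta"
  shows "(\<Sum>K\<leftarrow>Ks. op_apply n d (prod_op n d K) alpha x * cnj (op_apply n d (prod_op n d K) alpha y))
     = beta x * cnj (beta y)"
proof -
  have "kraus_apply n d Ks (ketbra alpha alpha) x y = ketbra beta beta x y" using assms by simp
  then show ?thesis unfolding kraus_apply_def ketbra_sandwich by (simp add: ketbra_def)
qed

lemma kraus_prop:
  assumes w: "sep_wit Ks" and K: "K \<in> set Ks"
  shows "op_apply n d (prod_op n d K) alpha = (\<lambda>xs. cK K * beta xs)"
proof (intro ext)
  fix xs
  show "op_apply n d (prod_op n d K) alpha xs = cK K * beta xs"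
  proof (cases "xs \<in> idx n d")
    case True
    have kp: "kraus_apply n d Ks (ketbra alpha alpha) = ketbra beta beta" using w unfolding sep_wit_def by auto
    show ?thesis unfolding cK_def
      by (rule rank_one_decomp[where I="idx n d" and ks=Ks and v="\<lambda>K. op_apply n d (prod_op n d K) alpha"])
         (use kraus_pointwise[OF kp] x0 K True in auto)
  next
    case False
    then show ?thesis using beta_in in_space_apply[OF supp_prod_op, of n d K alpha]
      unfolding in_space_def by simp
  qed
qed

lemma sum_cK:
  assumes w: "sep_wit Ks"
  shows "(\<Sum>K\<leftarrow>Ks. cK K * cnj (cK K)) = 1"
proof -
  have kp: "kraus_apply n d Ks (ketbra alpha alpha) = ketbra beta beta" using w unfolding sep_wit_def by auto
  have "(\<Sum>K\<leftarrow>Ks. op_apply n d (prod_op n d K) alpha x0 * cnj (op_apply n d (prod_op n d K) alpha x0))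
     = beta x0 * cnj (beta x0)" by (rule kraus_pointwise[OF kp])
  also have "(\<Sum>K\<leftarrow>Ks. op_apply n d (prod_op n d K) alpha x0 * cnj (op_apply n d (prod_op n d K) alpha x0))
     = (\<Sum>K\<leftarrow>Ks. (cK K * cnj (cK K)) * (beta x0 * cnj (beta x0)))"
    using kraus_prop[OF w] by (intro arg_cong[where f=sum_list] map_cong) (auto simp: ac_simps)
  also have "\<dots> = (\<Sum>K\<leftarrow>Ks. cK K * cnj (cK K)) * (beta x0 * cnj (beta x0))"
    by (simp add: sum_list_mult_const)
  finally show ?thesis using x0(2) by simp
qed

lemma stab_decomp:
  assumes K: "local_mats n d K" and eq: "op_apply n d (prod_op n d K) alpha = (\<lambda>xs. c * beta xs)"
    and c: "c \<noteq> 0"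
  shows "local_GL n d K \<and> (\<exists>S\<in>stabilizer n d psi. op_mult n d (prod_op n d K) PG = smul c (op_mult n d PH S))"
proof -
  define X where "X j = hi j * (K j * g j)" for j
  have KG: "local_mats n d (\<lambda>j. K j * g j)" by (rule local_mats_mult[OF K g_mats])
  have Xc: "local_mats n d X" unfolding X_def by (rule local_mats_mult[OF hi_mats KG])
  define M where "M = op_mult n d (prod_op n d K) PG"
  have suppM: "supp_op n d M" unfolding M_def by (intro supp_op_mult supp_prod_op supp_PG)
  have PX: "prod_op n d X = op_mult n d PHi M"
    unfolding M_def PHi_def PG_def prod_op_mult[OF K g_mats] prod_op_mult[OF hi_mats KG] X_def ..
  have PHi_beta: "op_apply n d PHi beta = psi"
    unfolding beta_def op_apply_mult[symmetric] PHi_PH by (rule op_apply_id[OF psi_in])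
  have PXpsi: "op_apply n d (prod_op n d X) psi = (\<lambda>xs. c * psi xs)"
    unfolding PX M_def op_apply_mult alpha_def[symmetric] eq apply_scaled PHi_beta ..
  have detX: "det (X j) \<noteq> 0" if j: "j < n" for j
    by (rule local_invertible[OF full Xc PXpsi c j])
  have detK: "det (K j) \<noteq> 0" if j: "j < n" for j
  proof
    assume "det (K j) = 0"
    have Kj: "K j \<in> carrier_mat (d j) (d j)" using K j unfolding local_mats_def by auto
    have gj: "g j \<in> carrier_mat (d j) (d j)" using g_mats j unfolding local_mats_def by auto
    have "det (X j) = det (hi j) * (det (K j) * det (g j))"
      unfolding X_def using hi_props[OF j] Kj gj
      by (simp add: det_mult[of _ "d j"])
    then show False using detX[OF j] \<open>det (K j) = 0\<close> by simp
  qed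
  have KGL: "local_GL n d K"
    using K detK invertible_det unfolding local_GL_def local_mats_def by blast
  define X' where "X' = X(0 := (1/c) \<cdot>\<^sub>m X 0)"
  have X0: "X 0 \<in> carrier_mat (d 0) (d 0)" using Xc npos unfolding local_mats_def by auto
  have X'GL: "local_GL n d X'"
    unfolding local_GL_def
  proof (intro conjI allI impI)
    show "local_mats n d X'" using Xc X0 unfolding local_mats_def X'_def by auto
    fix j assume j: "j < n"
    show "invertible_mat (X' j)"
    proof (cases "j = 0")
      case True
      have "det ((1/c) \<cdot>\<^sub>m X 0) \<noteq> 0" using detX[OF npos] c by simp
      then show ?thesis using True X0 invertible_det[of "(1/c) \<cdot>\<^sub>m X 0" "d 0"] unfolding X'_def by auto
    next
      case False
      then show ?thesis using detX[OF j] invertible_det[of "X j" "d j"] Xc j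
        unfolding X'_def local_mats_def by auto
    qed
  qed
  have PX': "prod_op n d X' = smul (1/c) (prod_op n d X)"
    unfolding X'_def by (rule prod_op_scale0[where K=X and d=d and n=n, OF npos X0])
  define S where "S = prod_op n d X'"
  have "op_apply n d S psi = psi"
    unfolding S_def PX' smul_apply PXpsi using c by simp
  then have Sst: "S \<in> stabilizer n d psi" unfolding stabilizer_def S_def using X'GL by auto
  have "op_mult n d PH S = smul (1/c) M"
    unfolding S_def PX' smul_mult_right PX op_mult_assoc[symmetric] PH_PHi op_mult_id_left[OF suppM] ..
  then have "M = smul c (op_mult n d PH S)" using c by (simp add: smul_smul)
  then show ?thesis using KGL Sst unfolding M_def by auto
qed

lemma adj_PHS: "op_mult n d (op_adj (op_mult n d PH S)) (op_mult n d PH S) = op_mult n d (op_mult n d (op_adj S) HH) S"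
  unfolding HH_def by (simp add: op_adj_mult op_mult_assoc)

lemma trace_stab:
  assumes S: "S \<in> stabilizer n d psi"
  shows "op_trace n d (op_mult n d (op_mult n d (op_adj S) HH) S) = op_trace n d HH"
proof -
  obtain U where U: "local_U n d U" and SU: "S = prod_op n d U" using stab_unitary S by blast
  have Um: "local_mats n d U" using U unfolding local_U_def unitary_mat_def local_mats_def by auto
  have UU: "U j * cadj (U j) = 1\<^sub>m (d j)" if j: "j < n" for j
  proof -
    have Uj: "U j \<in> carrier_mat (d j) (d j)" and e: "cadj (U j) * U j = 1\<^sub>m (d j)"
      using U j unfolding local_U_def unitary_mat_def by auto
    show ?thesis by (rule mat_mult_left_right_inverse[OF cadj_carrier[OF Uj] Uj e])
  qed
  have SS: "op_mult n d S (op_adj S) = op_id n d"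
    unfolding SU prod_op_adj[OF Um] prod_op_mult[OF Um local_mats_cadj[OF Um]] prod_op_one[symmetric]
    by (rule prod_op_cong) (use UU in auto)
  have "op_trace n d (op_mult n d (op_mult n d (op_adj S) HH) S) = op_trace n d (op_mult n d S (op_mult n d (op_adj S) HH))"
    by (rule trace_comm)
  also have "\<dots> = op_trace n d (op_mult n d (op_mult n d S (op_adj S)) HH)"
    by (simp add: op_mult_assoc)
  also have "\<dots> = op_trace n d HH" unfolding SS op_mult_id_left[OF supp_HH] ..
  finally show ?thesis .
qed

definition "MK K = op_mult n d (prod_op n d K) PG"

lemma GG_decomp:
  assumes w: "sep_wit Ks"
  shows "GG = (\<lambda>xs ys. \<Sum>K\<leftarrow>Ks. op_mult n d (op_adj (MK K)) (MK K) xs ys)"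
proof -
  have tp: "(\<lambda>xs ys. \<Sum>K\<leftarrow>Ks. op_mult n d (op_adj (prod_op n d K)) (prod_op n d K) xs ys) = op_id n d"
    using w unfolding sep_wit_def trace_preserving_def by auto
  have "GG = op_mult n d (op_adj PG) (op_mult n d (op_id n d) PG)"
    unfolding GG_def op_mult_id_left[OF supp_PG] ..
  also have "\<dots> = (\<lambda>xs ys. \<Sum>K\<leftarrow>Ks. op_mult n d (op_adj PG) (op_mult n d (op_mult n d (op_adj (prod_op n d K)) (prod_op n d K)) PG) xs ys)"
    unfolding tp[symmetric] op_mult_sum_left op_mult_sum_right ..
  also have "\<dots> = (\<lambda>xs ys. \<Sum>K\<leftarrow>Ks. op_mult n d (op_adj (MK K)) (MK K) xs ys)"
    unfolding MK_def by (simp add: op_adj_mult op_mult_assoc)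
  finally show ?thesis .
qed

lemma trace_nonneg:
  obtains r where "r \<ge> 0" "op_trace n d (op_mult n d (op_adj A) A) = complex_of_real r"
    "r = 0 \<Longrightarrow> (\<forall>xs\<in>idx n d. \<forall>ys\<in>idx n d. A xs ys = 0)"
proof -
  define r where "r = (\<Sum>xs\<in>idx n d. \<Sum>ys\<in>idx n d. (cmod (A ys xs))\<^sup>2)"
  have "r \<ge> 0" unfolding r_def by (intro sum_nonneg) auto
  moreover have "op_trace n d (op_mult n d (op_adj A) A) = complex_of_real r"
    unfolding r_def by (rule trace_adj_self)
  moreover have "(\<forall>xs\<in>idx n d. \<forall>ys\<in>idx n d. A xs ys = 0)" if "r = 0"
  proof -
    have "\<forall>xs\<in>idx n d. (\<Sum>ys\<in>idx n d. (cmod (A ys xs))\<^sup>2) = 0"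
      using that unfolding r_def by (subst sum_nonneg_eq_0_iff[symmetric]) (auto intro: sum_nonneg)
    then have "\<forall>xs\<in>idx n d. \<forall>ys\<in>idx n d. (cmod (A ys xs))\<^sup>2 = 0"
      by (subst (asm) sum_nonneg_eq_0_iff) auto
    then show ?thesis by auto
  qed
  ultimately show ?thesis using that by blast
qed

end


lemma of_real_sum_list: "complex_of_real (\<Sum>x\<leftarrow>xs. f x) = (\<Sum>x\<leftarrow>xs. complex_of_real (f x))"
  by (induction xs) auto

lemma op_mult_zero_left[simp]: "op_mult n d (\<lambda>_ _. 0) A = (\<lambda>_ _. 0)"
  unfolding op_mult_def by simp

lemma op_mult_zero_right[simp]: "op_mult n d A (\<lambda>_ _. 0) = (\<lambda>_ _. 0)"
  unfolding op_mult_def by simp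

lemma op_adj_zero[simp]: "op_adj (\<lambda>_ _. 0) = (\<lambda>_ _. 0)"
  unfolding op_adj_def by simp

context L2
begin

definition "er K = (if cK K = 0 then Re (op_trace n d (op_mult n d (op_adj (MK K)) (MK K))) else 0)"

lemma supp_MK: "supp_op n d (MK K)"
  unfolding MK_def by (intro supp_op_mult supp_prod_op supp_PG)

lemma trace_term:
  assumes w: "sep_wit Ks" and K: "K \<in> set Ks"
  shows "op_trace n d (op_mult n d (op_adj (MK K)) (MK K)) = cK K * cnj (cK K) * op_trace n d HH + complex_of_real (er K)"
    and "er K \<ge> 0"
    and "er K = 0 \<Longrightarrow> cK K = 0 \<Longrightarrow> prod_op n d K = (\<lambda>_ _. 0)"
proof -
  have Km: "local_mats n d K" using w K unfolding sep_wit_def by auto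
  have eq: "op_apply n d (prod_op n d K) alpha = (\<lambda>xs. cK K * beta xs)" by (rule kraus_prop[OF w K])
  obtain r where r: "r \<ge> 0" "op_trace n d (op_mult n d (op_adj (MK K)) (MK K)) = complex_of_real r"
    "r = 0 \<Longrightarrow> (\<forall>xs\<in>idx n d. \<forall>ys\<in>idx n d. MK K xs ys = 0)"
    using trace_nonneg by blast
  show "op_trace n d (op_mult n d (op_adj (MK K)) (MK K)) = cK K * cnj (cK K) * op_trace n d HH + complex_of_real (er K)"
  proof (cases "cK K = 0")
    case False
    then obtain S where S: "S \<in> stabilizer n d psi" "MK K = smul (cK K) (op_mult n d PH S)"
      using stab_decomp[OF Km eq] unfolding MK_def by blast
    have "op_mult n d (op_adj (MK K)) (MK K) = smul (cnj (cK K) * cK K) (op_mult n d (op_mult n d (op_adj S) HH) S)"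
      unfolding S(2) smul_adj smul_mult_left smul_mult_right smul_smul adj_PHS by (simp add: mult.commute)
    then show ?thesis using False trace_stab[OF S(1)] unfolding er_def by (simp add: op_trace_smul ac_simps)
  next
    case True
    then show ?thesis using r unfolding er_def by simp
  qed
  show "er K \<ge> 0" using r unfolding er_def by simp
  assume e0: "er K = 0" and c0: "cK K = 0"
  then have "r = 0" using r unfolding er_def by simp
  then have z: "\<forall>xs\<in>idx n d. \<forall>ys\<in>idx n d. MK K xs ys = 0" using r by blast
  have "MK K = (\<lambda>_ _. 0)"
  proof (intro ext)
    fix xs ys show "MK K xs ys = 0" using z supp_MK[of K] unfolding supp_op_def by blast
  qed
  then have "op_mult n d (MK K) PGi = (\<lambda>_ _. 0)" by simp
  moreover have "op_mult n d (MK K) PGi = prod_op n d K"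
    unfolding MK_def op_mult_assoc PG_PGi by (rule op_mult_id_right[OF supp_prod_op])
  ultimately show "prod_op n d K = (\<lambda>_ _. 0)" by simp
qed

lemma trace_split:
  assumes w: "sep_wit Ks"
  shows "op_trace n d GG = op_trace n d HH + complex_of_real (\<Sum>K\<leftarrow>Ks. er K)"
proof -
  have "op_trace n d GG = (\<Sum>K\<leftarrow>Ks. op_trace n d (op_mult n d (op_adj (MK K)) (MK K)))"
    by (subst GG_decomp[OF w]) (rule op_trace_sum)
  also have "\<dots> = (\<Sum>K\<leftarrow>Ks. cK K * cnj (cK K) * op_trace n d HH + complex_of_real (er K))"
    using trace_term(1)[OF w] by (intro arg_cong[where f=sum_list] map_cong) auto
  also have "\<dots> = (\<Sum>K\<leftarrow>Ks. cK K * cnj (cK K)) * op_trace n d HH + complex_of_real (\<Sum>K\<leftarrow>Ks. er K)"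
    by (simp add: sum_list_addf sum_list_mult_const of_real_sum_list)
  finally show ?thesis using sum_cK[OF w] by simp
qed

lemma part1:
  assumes w: "sep_wit Ks"
  shows "Re (op_trace n d GG) \<ge> Re (op_trace n d HH)"
proof -
  have "(\<Sum>K\<leftarrow>Ks. er K) \<ge> 0" using trace_term(2)[OF w] by (intro sum_list_nonneg) auto
  then show ?thesis using trace_split[OF w] by simp
qed

lemma bad_zero:
  assumes w: "sep_wit Ks" and eqt: "op_trace n d GG = op_trace n d HH"
    and K: "K \<in> set Ks" and c0: "cK K = 0"
  shows "prod_op n d K = (\<lambda>_ _. 0)"
proof -
  have "(\<Sum>K\<leftarrow>Ks. er K) = 0" using trace_split[OF w] eqt by simp
  then have "\<forall>x\<in>set (map er Ks). x = 0"
    using trace_term(2)[OF w] by (subst sum_list_nonneg_eq_0_iff[symmetric]) auto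
  then have "er K = 0" using K by auto
  then show ?thesis using trace_term(3)[OF w K] c0 by blast
qed

end


context L2
begin

definition "SK K = (SOME S. S \<in> stabilizer n d psi \<and> MK K = smul (cK K) (op_mult n d PH S))"

lemma SK:
  assumes w: "sep_wit Ks" and K: "K \<in> set Ks" and c: "cK K \<noteq> 0"
  shows "SK K \<in> stabilizer n d psi" "MK K = smul (cK K) (op_mult n d PH (SK K))" "local_GL n d K"
proof -
  have Km: "local_mats n d K" using w K unfolding sep_wit_def by auto
  have st: "local_GL n d K \<and> (\<exists>S\<in>stabilizer n d psi. MK K = smul (cK K) (op_mult n d PH S))"
    using stab_decomp[OF Km kraus_prop[OF w K] c] unfolding MK_def .
  then have "\<exists>S. S \<in> stabilizer n d psi \<and> MK K = smul (cK K) (op_mult n d PH S)" by blast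
  from someI_ex[OF this] show "SK K \<in> stabilizer n d psi" "MK K = smul (cK K) (op_mult n d PH (SK K))"
    unfolding SK_def by auto
  show "local_GL n d K" using st by blast
qed

lemma part2_ps:
  assumes w: "sep_wit Ks" and eqt: "op_trace n d GG = op_trace n d HH"
  shows "\<exists>ps :: (real \<times> oper) list.
                   (\<forall>(p, S)\<in>set ps. p \<ge> 0 \<and> S \<in> stabilizer n d psi)
                 \<and> (\<Sum>(p, S)\<leftarrow>ps. p) = 1
                 \<and> (\<lambda>xs ys. \<Sum>(p, S)\<leftarrow>ps. complex_of_real p *
                       op_mult n d (op_mult n d (op_adj S) HH) S xs ys) = GG"
proof -
  define ps where "ps = map (\<lambda>K. ((cmod (cK K))\<^sup>2, SK K)) (filter (\<lambda>K. cK K \<noteq> 0) Ks)"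
  have A: "\<forall>(p, S)\<in>set ps. p \<ge> 0 \<and> S \<in> stabilizer n d psi"
    unfolding ps_def using SK(1)[OF w] by auto
  have "complex_of_real (\<Sum>K\<leftarrow>Ks. (cmod (cK K))\<^sup>2) = 1"
    using sum_cK[OF w] unfolding sum_list_cnj_sq .
  then have s1: "(\<Sum>K\<leftarrow>Ks. (cmod (cK K))\<^sup>2) = 1" by simp
  have B: "(\<Sum>(p, S)\<leftarrow>ps. p) = 1"
  proof -
    have "(\<Sum>(p, S)\<leftarrow>ps. p) = (\<Sum>K\<leftarrow>filter (\<lambda>K. cK K \<noteq> 0) Ks. (cmod (cK K))\<^sup>2)"
      unfolding ps_def by (simp add: o_def)
    also have "\<dots> = (\<Sum>K\<leftarrow>Ks. (cmod (cK K))\<^sup>2)"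
      by (rule sum_list_filter_zero) auto
    finally show ?thesis using s1 by simp
  qed
  have C: "(\<lambda>xs ys. \<Sum>(p, S)\<leftarrow>ps. complex_of_real p * op_mult n d (op_mult n d (op_adj S) HH) S xs ys) = GG"
  proof (intro ext)
    fix xs ys
    have "(\<Sum>(p, S)\<leftarrow>ps. complex_of_real p * op_mult n d (op_mult n d (op_adj S) HH) S xs ys)
       = (\<Sum>K\<leftarrow>filter (\<lambda>K. cK K \<noteq> 0) Ks. complex_of_real ((cmod (cK K))\<^sup>2) * op_mult n d (op_mult n d (op_adj (SK K)) HH) (SK K) xs ys)"
      unfolding ps_def by (simp add: o_def)
    also have "\<dots> = (\<Sum>K\<leftarrow>filter (\<lambda>K. cK K \<noteq> 0) Ks. op_mult n d (op_adj (MK K)) (MK K) xs ys)"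
    proof (intro arg_cong[where f=sum_list] map_cong refl)
      fix K assume "K \<in> set (filter (\<lambda>K. cK K \<noteq> 0) Ks)"
      then have K: "K \<in> set Ks" and c: "cK K \<noteq> 0" by auto
      have "op_mult n d (op_adj (MK K)) (MK K) = smul (cnj (cK K) * cK K) (op_mult n d (op_mult n d (op_adj (SK K)) HH) (SK K))"
        unfolding SK(2)[OF w K c] smul_adj smul_mult_left smul_mult_right smul_smul adj_PHS by (simp add: mult.commute)
      then show "complex_of_real ((cmod (cK K))\<^sup>2) * op_mult n d (op_mult n d (op_adj (SK K)) HH) (SK K) xs ys
          = op_mult n d (op_adj (MK K)) (MK K) xs ys"
        by (simp add: smul_def cnorm_sq)
    qed
    also have "\<dots> = (\<Sum>K\<leftarrow>Ks. op_mult n d (op_adj (MK K)) (MK K) xs ys)"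
    proof (rule sum_list_filter_zero)
      fix K assume K: "K \<in> set Ks" and "\<not> cK K \<noteq> 0"
      then have "prod_op n d K = (\<lambda>_ _. 0)" using bad_zero[OF w eqt K] by simp
      then show "op_mult n d (op_adj (MK K)) (MK K) xs ys = 0" unfolding MK_def by simp
    qed
    also have "\<dots> = GG xs ys" by (subst GG_decomp[OF w]) simp
    finally show "(\<Sum>(p, S)\<leftarrow>ps. complex_of_real p * op_mult n d (op_mult n d (op_adj S) HH) S xs ys) = GG xs ys" .
  qed
  show ?thesis using A B C by blast
qed

lemma part2_sep1:
  assumes w: "sep_wit Ks" and eqt: "op_trace n d GG = op_trace n d HH"
  shows "SEP1_transformable n d alpha beta"
proof -
  define Ks' where "Ks' = filter (\<lambda>K. cK K \<noteq> 0) Ks"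
  have bad: "prod_op n d K = (\<lambda>_ _. 0)" if "K \<in> set Ks" "\<not> cK K \<noteq> 0" for K
    using bad_zero[OF w eqt] that by simp
  have A: "\<forall>K\<in>set Ks'. local_GL n d K" unfolding Ks'_def using SK(3)[OF w] by auto
  have tp: "(\<lambda>xs ys. \<Sum>K\<leftarrow>Ks. op_mult n d (op_adj (prod_op n d K)) (prod_op n d K) xs ys) = op_id n d"
    using w unfolding sep_wit_def trace_preserving_def by auto
  have B: "trace_preserving n d Ks'"
    unfolding trace_preserving_def tp[symmetric] Ks'_def
    by (intro ext sum_list_filter_zero) (simp add: bad)
  have kp: "kraus_apply n d Ks (ketbra alpha alpha) = ketbra beta beta"
    using w unfolding sep_wit_def by auto
  have C: "kraus_apply n d Ks' (ketbra alpha alpha) = ketbra beta beta"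
    unfolding kp[symmetric] kraus_apply_def Ks'_def
    by (intro ext sum_list_filter_zero) (simp add: bad)
  show ?thesis unfolding SEP1_transformable_def using A B C by blast
qed

end


lemma op_adj_id: "op_adj (op_id n d) = op_id n d"
  unfolding op_adj_def op_id_def by (intro ext) auto

lemma sum_list_smul_pointwise:
  "(\<lambda>xs ys. \<Sum>e\<leftarrow>es. smul (c e) (F e) xs ys) = (\<lambda>xs ys. \<Sum>e\<leftarrow>es. c e * F e xs ys)"
  unfolding smul_def ..

context L2
begin

definition "LS S = (SOME L. local_GL n d L \<and> S = prod_op n d L \<and> op_apply n d S psi = psi)"

lemma LS: "S \<in> stabilizer n d psi \<Longrightarrow> local_GL n d (LS S) \<and> S = prod_op n d (LS S) \<and> op_apply n d S psi = psi"
proof -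
  assume "S \<in> stabilizer n d psi"
  then have "\<exists>L. local_GL n d L \<and> S = prod_op n d L \<and> op_apply n d S psi = psi"
    unfolding stabilizer_def by blast
  from someI_ex[OF this] show ?thesis unfolding LS_def .
qed

definition "KB S = (\<lambda>j. h j * (LS S j * gi j))"
definition "KK e = (KB (snd e))(0 := complex_of_real (sqrt (fst e)) \<cdot>\<^sub>m KB (snd e) 0)"
definition "NN S = op_mult n d PH (op_mult n d S PGi)"

lemma KK_props:
  assumes S: "S \<in> stabilizer n d psi"
  shows "local_mats n d (KK (p, S))" "prod_op n d (KK (p, S)) = smul (complex_of_real (sqrt p)) (NN S)"
proof -
  have L: "local_mats n d (LS S)" using LS[OF S] unfolding local_GL_def by auto
  have LG: "local_mats n d (\<lambda>j. LS S j * gi j)" by (rule local_mats_mult[OF L gi_mats])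
  have KBm: "local_mats n d (KB S)" unfolding KB_def by (rule local_mats_mult[OF h_mats LG])
  have KB0: "KB S 0 \<in> carrier_mat (d 0) (d 0)" using KBm npos unfolding local_mats_def by auto
  show "local_mats n d (KK (p, S))" using KBm KB0 unfolding KK_def local_mats_def by auto
  have "prod_op n d (KB S) = NN S"
  proof -
    from LS[OF S] have "S = prod_op n d (LS S)" by blast
    then have e: "prod_op n d (LS S) = S" by (rule sym)
    have "NN S = op_mult n d (prod_op n d h) (op_mult n d (prod_op n d (LS S)) (prod_op n d gi))"
      unfolding NN_def PH_def PGi_def e ..
    also have "\<dots> = prod_op n d (KB S)"
      unfolding prod_op_mult[OF L gi_mats] prod_op_mult[OF h_mats LG] KB_def ..
    finally show ?thesis by (rule sym)
  qed
  then show "prod_op n d (KK (p, S)) = smul (complex_of_real (sqrt p)) (NN S)"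
    unfolding KK_def using prod_op_scale0[where K="KB S" and n=n and d=d, OF npos KB0] by simp
qed

lemma NN_alpha: assumes S: "S \<in> stabilizer n d psi" shows "op_apply n d (NN S) alpha = beta"
proof -
  have "op_apply n d PGi (op_apply n d PG psi) = psi"
    unfolding op_apply_mult[symmetric] PGi_PG by (rule op_apply_id[OF psi_in])
  moreover have "op_apply n d S psi = psi" using LS[OF S] by blast
  ultimately show ?thesis unfolding NN_def alpha_def beta_def op_apply_mult by simp
qed

lemma NN_adj: "op_mult n d (op_adj (NN S)) (NN S) = op_mult n d (op_mult n d (op_adj PGi) (op_mult n d (op_mult n d (op_adj S) HH) S)) PGi"
  unfolding NN_def HH_def by (simp add: op_adj_mult op_mult_assoc)

lemma part2_back:
  assumes ps: "\<forall>(p, S)\<in>set ps. p \<ge> 0 \<and> S \<in> stabilizer n d psi"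
    and s1: "(\<Sum>(p, S)\<leftarrow>ps. p) = 1"
    and eq: "(\<lambda>xs ys. \<Sum>(p, S)\<leftarrow>ps. complex_of_real p * op_mult n d (op_mult n d (op_adj S) HH) S xs ys) = GG"
  shows "SEP_transformable n d alpha beta"
proof -
  define Ks where "Ks = map KK ps"
  have A: "\<forall>K\<in>set Ks. local_mats n d K" unfolding Ks_def using ps KK_props(1) by auto
  have B: "trace_preserving n d Ks"
    unfolding trace_preserving_def
  proof (intro ext)
    fix xs ys
    have "(\<Sum>K\<leftarrow>Ks. op_mult n d (op_adj (prod_op n d K)) (prod_op n d K) xs ys)
        = (\<Sum>(p, S)\<leftarrow>ps. complex_of_real p * op_mult n d (op_mult n d (op_adj PGi) (op_mult n d (op_mult n d (op_adj S) HH) S)) PGi xs ys)"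
      unfolding Ks_def map_map o_def
    proof (intro arg_cong[where f=sum_list] map_cong refl)
      fix e assume e: "e \<in> set ps"
      obtain p S where pS: "e = (p, S)" by (cases e)
      have p: "p \<ge> 0" and S: "S \<in> stabilizer n d psi" using ps e pS by auto
      have "op_mult n d (op_adj (prod_op n d (KK (p, S)))) (prod_op n d (KK (p, S)))
          = smul (complex_of_real (sqrt p) * complex_of_real (sqrt p)) (op_mult n d (op_adj (NN S)) (NN S))"
        unfolding KK_props(2)[OF S] smul_adj smul_mult_left smul_mult_right smul_smul by simp
      also have "complex_of_real (sqrt p) * complex_of_real (sqrt p) = complex_of_real p"
        using p by (simp add: of_real_mult[symmetric] del: of_real_mult)
      finally show "op_mult n d (op_adj (prod_op n d (KK e))) (prod_op n d (KK e)) xs ys =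
          (case e of (p, S) \<Rightarrow> complex_of_real p * op_mult n d (op_mult n d (op_adj PGi) (op_mult n d (op_mult n d (op_adj S) HH) S)) PGi xs ys)"
        unfolding pS NN_adj by (simp add: smul_def)
    qed
    also have "\<dots> = op_mult n d (op_mult n d (op_adj PGi) GG) PGi xs ys"
    proof -
      have "op_mult n d (op_mult n d (op_adj PGi) GG) PGi
         = op_mult n d (op_mult n d (op_adj PGi) (\<lambda>xs ys. \<Sum>e\<leftarrow>ps. smul (complex_of_real (fst e)) (op_mult n d (op_mult n d (op_adj (snd e)) HH) (snd e)) xs ys)) PGi"
        unfolding eq[symmetric] sum_list_smul_pointwise by (simp add: split_def)
      also have "\<dots> = (\<lambda>xs ys. \<Sum>e\<leftarrow>ps. smul (complex_of_real (fst e)) (op_mult n d (op_mult n d (op_adj PGi) (op_mult n d (op_mult n d (op_adj (snd e)) HH) (snd e))) PGi) xs ys)"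
        unfolding op_mult_sum_right op_mult_sum_left smul_mult_left smul_mult_right ..
      finally show ?thesis by (simp add: smul_def split_def)
    qed
    also have "\<dots> = op_id n d xs ys"
    proof -
      have "op_mult n d (op_mult n d (op_adj PGi) GG) PGi = op_mult n d (op_adj (op_mult n d PG PGi)) (op_mult n d PG PGi)"
        unfolding GG_def by (simp add: op_adj_mult op_mult_assoc)
      also have "\<dots> = op_id n d" unfolding PG_PGi op_adj_id by (rule op_mult_id_left[OF supp_op_id])
      finally show ?thesis by simp
    qed
    finally show "(\<Sum>K\<leftarrow>Ks. op_mult n d (op_adj (prod_op n d K)) (prod_op n d K) xs ys) = op_id n d xs ys" .
  qed
  have C: "kraus_apply n d Ks (ketbra alpha alpha) = ketbra beta beta"
    unfolding kraus_apply_def ketbra_sandwich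
  proof (intro ext)
    fix xs ys
    have "(\<Sum>K\<leftarrow>Ks. ketbra (op_apply n d (prod_op n d K) alpha) (op_apply n d (prod_op n d K) alpha) xs ys)
        = (\<Sum>(p, S)\<leftarrow>ps. complex_of_real p * ketbra beta beta xs ys)"
      unfolding Ks_def map_map o_def
    proof (intro arg_cong[where f=sum_list] map_cong refl)
      fix e assume e: "e \<in> set ps"
      obtain p S where pS: "e = (p, S)" by (cases e)
      have p: "p \<ge> 0" and S: "S \<in> stabilizer n d psi" using ps e pS by auto
      have "op_apply n d (prod_op n d (KK (p, S))) alpha = (\<lambda>xs. complex_of_real (sqrt p) * beta xs)"
        unfolding KK_props(2)[OF S] smul_apply NN_alpha[OF S] ..
      then have "ketbra (op_apply n d (prod_op n d (KK (p, S))) alpha) (op_apply n d (prod_op n d (KK (p, S))) alpha) xs ys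
          = (complex_of_real (sqrt p) * complex_of_real (sqrt p)) * ketbra beta beta xs ys"
        by (simp add: ketbra_def ac_simps)
      also have "complex_of_real (sqrt p) * complex_of_real (sqrt p) = complex_of_real p"
        using p by (simp add: of_real_mult[symmetric] del: of_real_mult)
      finally show "ketbra (op_apply n d (prod_op n d (KK e)) alpha) (op_apply n d (prod_op n d (KK e)) alpha) xs ys
          = (case e of (p, S) \<Rightarrow> complex_of_real p * ketbra beta beta xs ys)"
        unfolding pS by simp
    qed
    also have "\<dots> = complex_of_real (\<Sum>(p, S)\<leftarrow>ps. p) * ketbra beta beta xs ys"
      by (simp add: split_def sum_list_mult_const of_real_sum_list)
    finally show "(\<Sum>K\<leftarrow>Ks. ketbra (op_apply n d (prod_op n d K) alpha) (op_apply n d (prod_op n d K) alpha) xs ys)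
        = ketbra beta beta xs ys" using s1 by simp
  qed
  show ?thesis unfolding SEP_transformable_def using A B C by blast
qed

end


context L2
begin

lemma SEP_wit: "SEP_transformable n d alpha beta \<longleftrightarrow> (\<exists>Ks. sep_wit Ks)"
  unfolding SEP_transformable_def sep_wit_def ..

lemma main:
  "(SEP_transformable n d alpha beta \<longrightarrow> Re (op_trace n d GG) \<ge> Re (op_trace n d HH))
    \<and> (op_trace n d GG = op_trace n d HH \<longrightarrow>
         (SEP_transformable n d alpha beta
            \<longleftrightarrow> (\<exists>ps :: (real \<times> oper) list.
                   (\<forall>(p, S)\<in>set ps. p \<ge> 0 \<and> S \<in> stabilizer n d psi)
                 \<and> (\<Sum>(p, S)\<leftarrow>ps. p) = 1
                 \<and> (\<lambda>xs ys. \<Sum>(p, S)\<leftarrow>ps. complex_of_real p *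
                       op_mult n d (op_mult n d (op_adj S) HH) S xs ys) = GG))
       \<and> (SEP_transformable n d alpha beta \<longleftrightarrow> SEP1_transformable n d alpha beta))"
proof (intro conjI impI iffI)
  show "Re (op_trace n d GG) \<ge> Re (op_trace n d HH)" if "SEP_transformable n d alpha beta"
    using that part1 unfolding SEP_wit by blast
next
  assume eqt: "op_trace n d GG = op_trace n d HH"
  {
    assume "SEP_transformable n d alpha beta"
    then obtain Ks where w: "sep_wit Ks" unfolding SEP_wit by blast
    show "\<exists>ps :: (real \<times> oper) list.
                   (\<forall>(p, S)\<in>set ps. p \<ge> 0 \<and> S \<in> stabilizer n d psi)
                 \<and> (\<Sum>(p, S)\<leftarrow>ps. p) = 1
                 \<and> (\<lambda>xs ys. \<Sum>(p, S)\<leftarrow>ps. complex_of_real p *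
                       op_mult n d (op_mult n d (op_adj S) HH) S xs ys) = GG"
      by (rule part2_ps[OF w eqt])
  next
    assume "\<exists>ps :: (real \<times> oper) list.
                   (\<forall>(p, S)\<in>set ps. p \<ge> 0 \<and> S \<in> stabilizer n d psi)
                 \<and> (\<Sum>(p, S)\<leftarrow>ps. p) = 1
                 \<and> (\<lambda>xs ys. \<Sum>(p, S)\<leftarrow>ps. complex_of_real p *
                       op_mult n d (op_mult n d (op_adj S) HH) S xs ys) = GG"
    then show "SEP_transformable n d alpha beta" using part2_back by blast
  next
    assume "SEP_transformable n d alpha beta"
    then obtain Ks where w: "sep_wit Ks" unfolding SEP_wit by blast
    show "SEP1_transformable n d alpha beta" by (rule part2_sep1[OF w eqt])
  next
    assume "SEP1_transformable n d alpha beta"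
    then show "SEP_transformable n d alpha beta"
      unfolding SEP1_transformable_def SEP_transformable_def local_GL_def by blast
  }
qed

end

lemma idx_0: "idx 0 d = {[]}"
  unfolding idx_def by auto

lemma prod_op_0: "prod_op 0 d K = op_id 0 d"
  unfolding prod_op_def op_id_def idx_0 by (intro ext) auto

theorem lemma2:
  fixes n :: nat and d :: "nat \<Rightarrow> nat" and psi :: state
    and g h :: "nat \<Rightarrow> complex mat"
  assumes psi_in: "in_space n d psi"
    and psi_norm: "vnorm n d psi = 1"
    and full: "fully_entangled n d psi"
    and stab_unitary: "\<forall>S\<in>stabilizer n d psi. \<exists>U. local_U n d U \<and> S = prod_op n d U"
    and g_GL: "local_GL n d g" and h_GL: "local_GL n d h"
    and g_norm: "vnorm n d (op_apply n d (prod_op n d g) psi) = 1"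
    and h_norm: "vnorm n d (op_apply n d (prod_op n d h) psi) = 1"
  defines "G \<equiv> op_mult n d (op_adj (prod_op n d g)) (prod_op n d g)"
    and "H \<equiv> op_mult n d (op_adj (prod_op n d h)) (prod_op n d h)"
  shows "(SEP_transformable n d (op_apply n d (prod_op n d g) psi) (op_apply n d (prod_op n d h) psi)
            \<longrightarrow> Re (op_trace n d G) \<ge> Re (op_trace n d H))
    \<and> (op_trace n d G = op_trace n d H \<longrightarrow>
         (SEP_transformable n d (op_apply n d (prod_op n d g) psi) (op_apply n d (prod_op n d h) psi)
            \<longleftrightarrow> (\<exists>ps :: (real \<times> oper) list.
                   (\<forall>(p, S)\<in>set ps. p \<ge> 0 \<and> S \<in> stabilizer n d psi)
                 \<and> (\<Sum>(p, S)\<leftarrow>ps. p) = 1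
                 \<and> (\<lambda>xs ys. \<Sum>(p, S)\<leftarrow>ps. complex_of_real p *
                       op_mult n d (op_mult n d (op_adj S) H) S xs ys) = G))
       \<and> (SEP_transformable n d (op_apply n d (prod_op n d g) psi) (op_apply n d (prod_op n d h) psi)
            \<longleftrightarrow> SEP1_transformable n d (op_apply n d (prod_op n d g) psi) (op_apply n d (prod_op n d h) psi)))"
proof (cases "n = 0")
  case False
  interpret L2 n d psi g h
    using assms False by unfold_locales auto
  show ?thesis using main unfolding G_def H_def GG_def HH_def alpha_def beta_def PG_def PH_def .
next
  case True
  have PG: "prod_op n d g = op_id n d" and PH: "prod_op n d h = op_id n d"
    unfolding True by (rule prod_op_0)+
  have a: "op_apply n d (op_id n d) psi = psi" by (rule op_apply_id[OF psi_in])
  have GH: "G = op_id n d" "H = op_id n d"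
    unfolding G_def H_def PG PH op_adj_id by (rule op_mult_id_left[OF supp_op_id])+
  have sep: "SEP_transformable n d psi psi" and sep1: "SEP1_transformable n d psi psi"
  proof -
    have tp: "trace_preserving n d [g]"
      unfolding trace_preserving_def by (simp add: PG op_adj_id op_mult_id_left[OF supp_op_id])
    have kr: "kraus_apply n d [g] (ketbra psi psi) = ketbra psi psi"
      unfolding kraus_apply_def ketbra_sandwich by (simp add: PG a)
    have gl: "local_GL n d g" "local_mats n d g" using True unfolding local_GL_def local_mats_def by auto
    show "SEP_transformable n d psi psi" unfolding SEP_transformable_def using tp kr gl by (intro exI[of _ "[g]"]) auto
    show "SEP1_transformable n d psi psi" unfolding SEP1_transformable_def using tp kr gl by (intro exI[of _ "[g]"]) auto
  qed
  have st: "op_id n d \<in> stabilizer n d psi"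
    unfolding stabilizer_def using g_GL PG a by auto
  have ps: "\<exists>ps :: (real \<times> oper) list.
                   (\<forall>(p, S)\<in>set ps. p \<ge> 0 \<and> S \<in> stabilizer n d psi)
                 \<and> (\<Sum>(p, S)\<leftarrow>ps. p) = 1
                 \<and> (\<lambda>xs ys. \<Sum>(p, S)\<leftarrow>ps. complex_of_real p *
                       op_mult n d (op_mult n d (op_adj S) H) S xs ys) = G"
    using st by (intro exI[of _ "[(1, op_id n d)]"])
      (simp add: GH op_adj_id op_mult_id_left[OF supp_op_id])
  show ?thesis unfolding PG PH a using sep sep1 ps GH by simp
qed


end
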